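(* Consider the Decaying-$\epsilon$-FOCuS procedure (described in the context) on $M>1$ streams, where stream 1 has a change-point at $\nu=0$ (every observation of stream 1 is $\mathcal{N}(\mu_1,1)$ with $\mu_1\ne0$, all other observations $\mathcal{N}(0,1)$). Then for every $t\ge1$, $$\mathbb{P}_{M,0}\left(T_t^{(1)}<\frac{\mu_1^2t^{2/3}}{8},\ N_t^{(1)}>\frac{t^{2/3}}{2}\right)\le\exp\left(-\frac{t^{2/3}}{4}\left(\mu_1-\frac{\mu_1}{\sqrt2}\right)^2\right),$$ and for $t=0$ this probability is $0$.
   Context: Setting: there are $M$ independent data streams. At each time $t=1,2,\dots$ an agent selects one stream $A_t\in\{1,\dots,M\}$ and observes one value $X_t\in\mathbb{R}$ from it. The $i$-th observation taken from stream $m$ is denoted $X_i^{(m)}$. Pre-change observations are $\mathcal{N}(0,1)$. Stream 1 has a change-point $\nu$: if $A_t=1$ and $t>\nu$ then $X_t\sim\mathcal{N}(\mu_1,1)$ with $\mu_1\neq0$; otherwise $X_t\sim\mathcal{N}(0,1)$; observations are conditionally independent given the selections. $\mathbb{P}_{M,\nu}$ denotes probability for $M$ streams with change at $\nu$ in stream 1. $\mathcal{F}_t=\sigma(A_1,X_1,\dots,A_t,X_t)$. The sampling process and statistics are defined for all $t\ge 0$. Decaying-$\epsilon$-FOCuS: let $N_t^{(m)}$ be the number of times stream $m$ was selected up to and including time $t$. The local GLR statistic is $T_t^{(m)}=\max_{0\le k<N_t^{(m)}}\frac{(\sum_{i=k+1}^{N_t^{(m)}}X_i^{(m)})^2}{2(N_t^{(m)}-k)}$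 (and $T_t^{(m)}=0$ if $N_t^{(m)}=0$); $M_t=\arg\max_m T_t^{(m)}$. The local change-point estimate $\hat\nu_t^{(m)}$ is the time at which stream $m$'s $\hat k$-th observation was taken, where $\hat k$ is the maximizing index $k$ in $T_t^{(m)}$ (time $0$ if $\hat k=0$ or $N_t^{(m)}=0$); the global estimate is $\hat\nu_t=\hat\nu_t^{(M_t)}$; ties are broken uniformly at random. Initially $\hat\nu_0=0$, $M_0$ uniform on $[M]$. At time $t$, set $\epsilon_t=\min\{1, M/\max(1,t-\hat\nu_{t-1})^{1/3}\}$, draw $G_t\sim\mathrm{Bernoulli}(\epsilon_t)$ (conditionally on $\mathcal{F}_{t-1}$); if $G_t=1$ choose $A_t$ uniformly from $[M]$, otherwise $A_t=M_{t-1}$; then observe $X_t$ and update the statistics. *)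

theory Defs
  imports "HOL-Probability.Probability"
begin

(* Randomness: omega = (U, X).
   U (t, j), j = 0..3: iid Uniform(0,1) variables used at time t
     j = 0 : Bernoulli(eps_t) draw  G_t = [U(t,0) < eps_t]
     j = 1 : uniform exploration arm on {1..M}
     j = 2 : uniform tie-breaking for M_t = argmax_m T_t^(m)
     j = 3 : uniform tie-breaking for the maximizing index k-hat of stream M_t
   X (m, i) : the i-th observation (i >= 1) taken from stream m (reward-table model);
     with nu = 0, X(1,i) ~ N(mu,1) and X(m,i) ~ N(0,1) for m <> 1, all independent. *)

definition focus_space :: "real \<Rightarrow> ((nat \<times> nat \<Rightarrow> real) \<times> (nat \<times> nat \<Rightarrow> real)) measure" where
  "focus_space mu =
     (PiM UNIV (\<lambda>_. uniform_measure lborel {0<..<1::real}))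
     \<Otimes>\<^sub>M (PiM UNIV (\<lambda>p. density lborel (normal_density (if fst p = 1 then mu else 0) 1)))"

definition pick :: "real \<Rightarrow> nat set \<Rightarrow> nat" where
  "pick u S = sorted_list_of_set S ! nat \<lfloor>u * real (card S)\<rfloor>"

definition Ncount :: "nat list \<Rightarrow> nat \<Rightarrow> nat" where
  "Ncount h m = length (filter (\<lambda>a. a = m) h)"

definition seg :: "(nat \<times> nat \<Rightarrow> real) \<Rightarrow> nat \<Rightarrow> nat \<Rightarrow> nat \<Rightarrow> real" where
  "seg X m n k = (\<Sum>i\<in>{k+1..n}. X (m, i))^2 / (2 * real (n - k))"

definition Tstat :: "(nat \<times> nat \<Rightarrow> real) \<Rightarrow> nat list \<Rightarrow> nat \<Rightarrow> real" where
  "Tstat X h m = (let n = Ncount h m in if n = 0 then 0 else Max (seg X m n ` {..<n}))"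

definition khat :: "(nat \<times> nat \<Rightarrow> real) \<Rightarrow> (nat \<times> nat \<Rightarrow> real) \<Rightarrow> nat list \<Rightarrow> nat \<Rightarrow> nat" where
  "khat U X h m = (let n = Ncount h m in
     if n = 0 then 0 else pick (U (length h, 3)) {k. k < n \<and> seg X m n k = Tstat X h m})"

(* time at which the k-th observation of stream m was taken (0 if k = 0) *)
definition obs_time :: "nat list \<Rightarrow> nat \<Rightarrow> nat \<Rightarrow> nat" where
  "obs_time h m k = (if k = 0 then 0
     else filter (\<lambda>s. h ! (s - 1) = m) [1..<Suc (length h)] ! (k - 1))"

definition Mhat :: "(nat \<times> nat \<Rightarrow> real) \<Rightarrow> (nat \<times> nat \<Rightarrow> real) \<Rightarrow> nat \<Rightarrow> nat list \<Rightarrow> nat" where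
  "Mhat U X M h = pick (U (length h, 2))
     {m \<in> {1..M}. \<forall>m'\<in>{1..M}. Tstat X h m' \<le> Tstat X h m}"

definition nuhat :: "(nat \<times> nat \<Rightarrow> real) \<Rightarrow> (nat \<times> nat \<Rightarrow> real) \<Rightarrow> nat \<Rightarrow> nat list \<Rightarrow> nat" where
  "nuhat U X M h = (if h = [] then 0
     else obs_time h (Mhat U X M h) (khat U X h (Mhat U X M h)))"

definition eps :: "nat \<Rightarrow> nat \<Rightarrow> nat \<Rightarrow> real" where
  "eps M t nu = min 1 (real M / (max 1 (real t - real nu)) powr (1/3))"

(* A_{t} given history h of length t-1 *)
definition next_arm :: "(nat \<times> nat \<Rightarrow> real) \<Rightarrow> (nat \<times> nat \<Rightarrow> real) \<Rightarrow> nat \<Rightarrow> nat list \<Rightarrow> nat" where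
  "next_arm U X M h = (let t = Suc (length h) in
     if U (t, 0) < eps M t (nuhat U X M h) then pick (U (t, 1)) {1..M} else Mhat U X M h)"

primrec arms :: "(nat \<times> nat \<Rightarrow> real) \<Rightarrow> (nat \<times> nat \<Rightarrow> real) \<Rightarrow> nat \<Rightarrow> nat \<Rightarrow> nat list" where
  "arms U X M 0 = []"
| "arms U X M (Suc t) = arms U X M t @ [next_arm U X M (arms U X M t)]"

end

theory Submission imports Defs begin

lemma sets_focus: "sets (focus_space mu) =
  sets (PiM UNIV (\<lambda>_. lborel) \<Otimes>\<^sub>M PiM UNIV (\<lambda>_::nat\<times>nat. lborel::real measure))"
  unfolding focus_space_def
  by (intro sets_pair_measure_cong sets_PiM_cong) auto

lemma meas_focus_cong: "measurable (focus_space mu) N =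
  measurable (PiM UNIV (\<lambda>_. lborel) \<Otimes>\<^sub>M PiM UNIV (\<lambda>_::nat\<times>nat. lborel::real measure)) N"
  by (rule measurable_cong_sets[OF sets_focus refl])

lemma space_focus: "space (focus_space mu) = UNIV"
  using sets_eq_imp_space_eq[OF sets_focus] by (simp add: space_pair_measure space_PiM)

lemma mU[measurable]: "(\<lambda>\<omega>. fst \<omega> p) \<in> borel_measurable (focus_space mu)"
  unfolding meas_focus_cong by measurable

lemma mX[measurable]: "(\<lambda>\<omega>. snd \<omega> p) \<in> borel_measurable (focus_space mu)"
  unfolding meas_focus_cong by measurable

lemma m_seg[measurable]: "(\<lambda>\<omega>. seg (snd \<omega>) m n k) \<in> borel_measurable (focus_space mu)"
  unfolding seg_def by measurable

lemma m_Tstat[measurable]: "(\<lambda>\<omega>. Tstat (snd \<omega>) h m) \<in> borel_measurable (focus_space mu)"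
  unfolding Tstat_def Let_def by measurable

lemma m_nat_floor[measurable]: "(g::_\<Rightarrow>real) \<in> borel_measurable N \<Longrightarrow> (\<lambda>\<omega>. nat \<lfloor>g \<omega>\<rfloor>) \<in> measurable N (count_space UNIV)"
proof -
  assume g: "g \<in> borel_measurable N"
  have "(\<lambda>\<omega>. \<lfloor>g \<omega>\<rfloor>) \<in> measurable N (count_space UNIV)"
    using measurable_compose[OF g measurable_real_floor] by simp
  then show ?thesis by (rule measurable_compose) simp
qed

lemma meas_pick:
  assumes g[measurable]: "g \<in> borel_measurable N"
    and S: "\<And>\<omega>. \<omega> \<in> space N \<Longrightarrow> S \<omega> \<subseteq> A" and A: "finite A"
    and SB: "\<And>B. B \<subseteq> A \<Longrightarrow> {\<omega>\<in>space N. S \<omega> = B} \<in> sets N"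
  shows "(\<lambda>\<omega>. pick (g \<omega>) (S \<omega>)) \<in> measurable N (count_space UNIV)"
proof -
  have m1: "(\<lambda>\<omega>. pick (g \<omega>) B) \<in> measurable N (count_space UNIV)" for B
  proof -
    have "(\<lambda>\<omega>. nat \<lfloor>g \<omega> * real (card B)\<rfloor>) \<in> measurable N (count_space UNIV)"
      by measurable
    then have "(\<lambda>\<omega>. (\<lambda>i. sorted_list_of_set B ! i) (nat \<lfloor>g \<omega> * real (card B)\<rfloor>)) \<in> measurable N (count_space UNIV)"
      by (rule measurable_compose) simp
    then show ?thesis unfolding pick_def .
  qed
  show ?thesis
    unfolding measurable_count_space_eq2_countable
  proof safe
    fix j :: nat
    have "(\<lambda>\<omega>. pick (g \<omega>) (S \<omega>)) -` {j} \<inter> space N =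
      (\<Union>B\<in>Pow A. {\<omega>\<in>space N. S \<omega> = B} \<inter> ((\<lambda>\<omega>. pick (g \<omega>) B) -` {j} \<inter> space N))"
      using S by auto
    also have "\<dots> \<in> sets N"
      using A SB m1 by (intro sets.finite_UN) (auto intro!: sets.Int measurable_sets[OF m1])
    finally show "(\<lambda>\<omega>. pick (g \<omega>) (S \<omega>)) -` {j} \<inter> space N \<in> sets N" .
  qed auto
qed

lemma m_Mhat[measurable]: "(\<lambda>\<omega>. Mhat (fst \<omega>) (snd \<omega>) M h) \<in> measurable (focus_space mu) (count_space UNIV)"
  unfolding Mhat_def
proof (rule meas_pick[where A="{1..M}"])
  fix B assume B: "B \<subseteq> {1..M}"
  have "{\<omega> \<in> space (focus_space mu). {m \<in> {1..M}. \<forall>m'\<in>{1..M}. Tstat (snd \<omega>) h m' \<le> Tstat (snd \<omega>) h m} = B}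
    = {\<omega> \<in> space (focus_space mu). \<forall>m\<in>{1..M}. (m \<in> B) = (\<forall>m'\<in>{1..M}. Tstat (snd \<omega>) h m' \<le> Tstat (snd \<omega>) h m)}"
    using B by blast
  also have "\<dots> \<in> sets (focus_space mu)" by measurable
  finally show "{\<omega> \<in> space (focus_space mu). {m \<in> {1..M}. \<forall>m'\<in>{1..M}. Tstat (snd \<omega>) h m' \<le> Tstat (snd \<omega>) h m} = B} \<in> sets (focus_space mu)" .
qed auto

lemma m_khat[measurable]: "(\<lambda>\<omega>. khat (fst \<omega>) (snd \<omega>) h m) \<in> measurable (focus_space mu) (count_space UNIV)"
proof (cases "Ncount h m = 0")
  case True then show ?thesis unfolding khat_def Let_def by simp
next
  case False
  let ?n = "Ncount h m"
  have "(\<lambda>\<omega>. pick (fst \<omega> (length h, 3)) {k. k < ?n \<and> seg (snd \<omega>) m ?n k = Tstat (snd \<omega>) h m}) \<in> measurable (focus_space mu) (count_space UNIV)"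
  proof (rule meas_pick[where A="{..<?n}"])
    fix B assume B: "B \<subseteq> {..<?n}"
    have "{\<omega> \<in> space (focus_space mu). {k. k < ?n \<and> seg (snd \<omega>) m ?n k = Tstat (snd \<omega>) h m} = B}
      = {\<omega> \<in> space (focus_space mu). \<forall>k\<in>{..<?n}. (k \<in> B) = (seg (snd \<omega>) m ?n k = Tstat (snd \<omega>) h m)}"
      using B by blast
    also have "\<dots> \<in> sets (focus_space mu)" by measurable
    finally show "{\<omega> \<in> space (focus_space mu). {k. k < ?n \<and> seg (snd \<omega>) m ?n k = Tstat (snd \<omega>) h m} = B} \<in> sets (focus_space mu)" .
  qed auto
  then show ?thesis using False unfolding khat_def Let_def by simp
qed

lemma m_nuhat[measurable]: "(\<lambda>\<omega>. nuhat (fst \<omega>) (snd \<omega>) M h) \<in> measurable (focus_space mu) (count_space UNIV)"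
proof -
  have "(\<lambda>\<omega>. (\<lambda>i \<omega>. if h = [] then 0 else obs_time h i (khat (fst \<omega>) (snd \<omega>) h i)) (Mhat (fst \<omega>) (snd \<omega>) M h) \<omega>)
     \<in> measurable (focus_space mu) (count_space UNIV)"
  proof (rule measurable_compose_countable[OF _ m_Mhat])
    fix i
    show "(\<lambda>\<omega>. if h = [] then 0 else obs_time h i (khat (fst \<omega>) (snd \<omega>) h i)) \<in> measurable (focus_space mu) (count_space UNIV)"
      using measurable_compose[OF m_khat, of "obs_time h i" _ h i] by simp
  qed
  then show ?thesis unfolding nuhat_def by simp
qed

lemma m_next_arm[measurable]: "(\<lambda>\<omega>. next_arm (fst \<omega>) (snd \<omega>) M h) \<in> measurable (focus_space mu) (count_space UNIV)"
proof -
  have "(\<lambda>\<omega>. (\<lambda>v \<omega>. if fst \<omega> (Suc (length h), 0) < eps M (Suc (length h)) v then pick (fst \<omega> (Suc (length h), 1)) {1..M} else Mhat (fst \<omega>) (snd \<omega>) M h) (nuhat (fst \<omega>) (snd \<omega>) M h) \<omega>)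
     \<in> measurable (focus_space mu) (count_space UNIV)"
  proof (rule measurable_compose_countable[OF _ m_nuhat])
    fix v
    have "(\<lambda>\<omega>. pick (fst \<omega> (Suc (length h), 1)) {1..M}) \<in> measurable (focus_space mu) (count_space UNIV)"
      by (rule meas_pick[where A="{1..M}"]) auto
    then show "(\<lambda>\<omega>. if fst \<omega> (Suc (length h), 0) < eps M (Suc (length h)) v then pick (fst \<omega> (Suc (length h), 1)) {1..M} else Mhat (fst \<omega>) (snd \<omega>) M h) \<in> measurable (focus_space mu) (count_space UNIV)"
      by measurable
  qed
  then show ?thesis unfolding next_arm_def Let_def by simp
qed

lemma m_arms[measurable]: "(\<lambda>\<omega>. arms (fst \<omega>) (snd \<omega>) M t) \<in> measurable (focus_space mu) (count_space UNIV)"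
proof (induction t)
  case 0 then show ?case by simp
next
  case (Suc t)
  have "(\<lambda>\<omega>. (\<lambda>h \<omega>. h @ [next_arm (fst \<omega>) (snd \<omega>) M h]) (arms (fst \<omega>) (snd \<omega>) M t) \<omega>) \<in> measurable (focus_space mu) (count_space UNIV)"
  proof (rule measurable_compose_countable[OF _ Suc])
    fix h :: "nat list"
    show "(\<lambda>\<omega>. h @ [next_arm (fst \<omega>) (snd \<omega>) M h]) \<in> measurable (focus_space mu) (count_space UNIV)"
      using measurable_compose[OF m_next_arm, of "\<lambda>a. h @ [a]"] by simp
  qed
  then show ?case by simp
qed



definition MX :: "real \<Rightarrow> nat \<times> nat \<Rightarrow> real measure" where
  "MX mu p = density lborel (normal_density (if fst p = 1 then mu else 0) 1)"

lemma prob_MX: "prob_space (MX mu p)"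
  unfolding MX_def by (simp add: prob_space_normal_density)

lemma sets_MX[simp]: "sets (MX mu p) = sets borel"
  unfolding MX_def by simp

lemma space_MX[simp]: "space (MX mu p) = UNIV"
  unfolding MX_def by simp

lemma pps: "product_prob_space (MX mu)"
  by (rule product_prob_spaceI) (rule prob_MX)

lemma psf: "product_sigma_finite (MX mu)"
  using pps unfolding product_prob_space_def by blast

lemma comp_any[measurable]: "(\<lambda>x. x j) \<in> borel_measurable (PiM I (MX mu))"
proof (cases "j \<in> I")
  case True
  then have "(\<lambda>x. x j) \<in> measurable (PiM I (MX mu)) (MX mu j)"
    by (rule measurable_component_singleton)
  then show ?thesis by (subst (asm) measurable_cong_sets[OF refl sets_MX])
next
  case False
  have eq: "\<And>x. x \<in> space (PiM I (MX mu)) \<Longrightarrow> x j = undefined"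
    using False by (cases j) (simp add: space_PiM PiE_def extensional_def)
  show ?thesis
    by (subst measurable_cong[OF eq]) auto
qed

lemma tilt: "normal_density mu 1 y * exp (- c * (y - mu) - c^2/2) = normal_density (mu - c) 1 y"
proof -
  have "-(y - mu)\<^sup>2 / (2 * 1\<^sup>2) + (- c * (y - mu) - c^2/2) = -(y - (mu - c))\<^sup>2 / (2 * 1\<^sup>2)"
    by (simp add: power2_eq_square field_simps)
  then show ?thesis
    unfolding normal_density_def by (simp add: exp_add[symmetric] mult.assoc)
qed

lemma int_r: "(\<integral>\<^sup>+ y. ennreal (exp (- c * (y - mu) - c^2/2)) \<partial>MX mu (1, k)) = 1"
proof -
  have "(\<integral>\<^sup>+ y. ennreal (exp (- c * (y - mu) - c^2/2)) \<partial>MX mu (1, k))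
     = (\<integral>\<^sup>+ y. ennreal (normal_density mu 1 y) * ennreal (exp (- c * (y - mu) - c^2/2)) \<partial>lborel)"
    unfolding MX_def by (simp add: nn_integral_density)
  also have "\<dots> = (\<integral>\<^sup>+ y. ennreal (normal_density (mu - c) 1 y) \<partial>lborel)"
  proof (rule nn_integral_cong)
    fix y
    show "ennreal (normal_density mu 1 y) * ennreal (exp (- c * (y - mu) - c^2/2)) = ennreal (normal_density (mu - c) 1 y)"
      using tilt[of mu y c] by (metis ennreal_mult' normal_density_nonneg)
  qed
  also have "\<dots> = emeasure (density lborel (normal_density (mu - c) 1)) UNIV"
    by (simp add: emeasure_density)
  also have "\<dots> = 1"
    using prob_space.emeasure_space_1[OF prob_space_normal_density[of 1 "mu - c"]] by simp
  finally show ?thesis .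
qed

definition rr :: "real \<Rightarrow> real \<Rightarrow> real \<Rightarrow> real" where
  "rr mu c y = exp (- c * (y - mu) - c^2/2)"

definition Bset :: "real \<Rightarrow> real \<Rightarrow> real \<Rightarrow> nat set \<Rightarrow> nat \<Rightarrow> nat \<Rightarrow> real \<Rightarrow> (nat \<times> nat \<Rightarrow> real) set" where
  "Bset mu c K S k d a = {x \<in> space (PiM (Pair 1 ` {k..<k+d}) (MX mu)).
     \<exists>n\<in>{k..k+d}. n \<in> S \<and> K \<le> a * (\<Prod>i\<in>{k..<n}. rr mu c (x (1,i)))}"

lemma Bset_sets[measurable]: "Bset mu c K S k d a \<in> sets (PiM (Pair 1 ` {k..<k+d}) (MX mu))"
  unfolding Bset_def rr_def by measurable

lemma shift_ex:
  fixes f :: "nat \<Rightarrow> real"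
  shows "(\<exists>n\<in>{k..Suc (k+d)}. n\<in>S \<and> K \<le> a * (\<Prod>i\<in>{k..<n}. f i)) \<longleftrightarrow>
    (K \<le> a \<and> k \<in> S) \<or> (\<exists>n\<in>{Suc k..Suc k+d}. n\<in>S \<and> K \<le> a * f k * (\<Prod>i\<in>{Suc k..<n}. f i))"
proof -
  have "{k..Suc (k+d)} = insert k {Suc k..Suc k+d}" by auto
  moreover have "n \<in> {Suc k..Suc k+d} \<Longrightarrow> (\<Prod>i\<in>{k..<n}. f i) = f k * (\<Prod>i\<in>{Suc k..<n}. f i)" for n
    by (subst prod.atLeast_Suc_lessThan) auto
  ultimately show ?thesis by (auto simp: mult.assoc)
qed

lemma Bset_triv:
  assumes "K > 0" "K \<le> a"
  shows "emeasure (PiM (Pair 1 ` {k..<k+d}) (MX mu)) (Bset mu c K S k d a) \<le> ennreal (a / K)"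
proof -
  interpret P: prob_space "PiM (Pair 1 ` {k..<k+d}) (MX mu)"
    by (rule prob_space_PiM) (rule prob_MX)
  have "emeasure (PiM (Pair 1 ` {k..<k+d}) (MX mu)) (Bset mu c K S k d a) \<le> 1"
    by (rule P.emeasure_le_1)
  also have "1 \<le> ennreal (a / K)" using assms by simp
  finally show ?thesis .
qed

lemma doob:
  assumes K: "K > 0" and a: "0 \<le> a"
  shows "emeasure (PiM (Pair 1 ` {k..<k+d}) (MX mu)) (Bset mu c K S k d a) \<le> ennreal (a / K)"
  using a
proof (induction d arbitrary: k a)
  case 0
  show ?case
  proof (cases "K \<le> a")
    case True then show ?thesis using Bset_triv K by blast
  next
    case False
    then have "Bset mu c K S k 0 a = {}" unfolding Bset_def by auto
    then show ?thesis by simp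
  qed
next
  case (Suc d)
  show ?case
  proof (cases "K \<le> a")
    case True then show ?thesis using Bset_triv K by blast
  next
    case False
    define I where "I = Pair (1::nat) ` {Suc k..<Suc k+d}"
    have I': "Pair 1 ` {k..<k + Suc d} = insert (1,k) I" unfolding I_def by auto
    have kI: "(1,k) \<notin> I" and fI: "finite I" unfolding I_def by auto
    have B'': "Bset mu c K S (Suc k) d b \<in> sets (PiM I (MX mu))" for b
      unfolding I_def by (rule Bset_sets)
    have key: "indicator (Bset mu c K S k (Suc d) a) (x((1,k) := y)) = indicator (Bset mu c K S (Suc k) d (a * rr mu c y)) x"
      if x: "x \<in> space (PiM I (MX mu))" for x :: "nat \<times> nat \<Rightarrow> real" and y
    proof -
      have xs: "x((1,k) := y) \<in> space (PiM (Pair 1 ` {k..<k + Suc d}) (MX mu))"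
        using x kI unfolding I' by (auto simp: space_PiM PiE_iff extensional_def)
      have "(\<exists>n\<in>{k..k + Suc d}. n \<in> S \<and> K \<le> a * (\<Prod>i\<in>{k..<n}. rr mu c ((x((1,k) := y)) (1,i))))
         \<longleftrightarrow> (\<exists>n\<in>{Suc k..Suc k+d}. n \<in> S \<and> K \<le> a * rr mu c y * (\<Prod>i\<in>{Suc k..<n}. rr mu c ((x((1,k) := y)) (1,i))))"
        using shift_ex[of k d S K a "\<lambda>i. rr mu c ((x((1,k) := y)) (1,i))"] False by simp
      also have "\<dots> \<longleftrightarrow> (\<exists>n\<in>{Suc k..Suc k+d}. n \<in> S \<and> K \<le> a * rr mu c y * (\<Prod>i\<in>{Suc k..<n}. rr mu c (x (1,i))))"
      proof -
        have "(\<Prod>i\<in>{Suc k..<n}. rr mu c ((x((1,k) := y)) (1,i))) = (\<Prod>i\<in>{Suc k..<n}. rr mu c (x (1,i)))" for n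
          by (rule prod.cong) auto
        then show ?thesis by simp
      qed
      finally have eqv: "(\<exists>n\<in>{k..k + Suc d}. n \<in> S \<and> K \<le> a * (\<Prod>i\<in>{k..<n}. rr mu c ((x((1,k) := y)) (1,i))))
         \<longleftrightarrow> (\<exists>n\<in>{Suc k..Suc k+d}. n \<in> S \<and> K \<le> a * rr mu c y * (\<Prod>i\<in>{Suc k..<n}. rr mu c (x (1,i))))" .
      have xs2: "x \<in> space (PiM (Pair 1 ` {Suc k..<Suc k + d}) (MX mu))" using x unfolding I_def .
      have "x((1,k) := y) \<in> Bset mu c K S k (Suc d) a \<longleftrightarrow> x \<in> Bset mu c K S (Suc k) d (a * rr mu c y)"
        unfolding Bset_def mem_Collect_eq using xs xs2 eqv by blast
      then show ?thesis by (simp only: indicator_def)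
    qed
    have "emeasure (PiM (Pair 1 ` {k..<k + Suc d}) (MX mu)) (Bset mu c K S k (Suc d) a)
        = (\<integral>\<^sup>+ x. indicator (Bset mu c K S k (Suc d) a) x \<partial>PiM (insert (1,k) I) (MX mu))"
      using Bset_sets[of mu c K S k "Suc d" a] unfolding I' by (simp add: nn_integral_indicator)
    also have "\<dots> = (\<integral>\<^sup>+ y. (\<integral>\<^sup>+ x. indicator (Bset mu c K S k (Suc d) a) (x((1,k) := y)) \<partial>PiM I (MX mu)) \<partial>MX mu (1,k))"
      using Bset_sets[of mu c K S k "Suc d" a] unfolding I'
      by (intro product_sigma_finite.product_nn_integral_insert_rev[OF psf fI kI]) simp
    also have "\<dots> = (\<integral>\<^sup>+ y. emeasure (PiM I (MX mu)) (Bset mu c K S (Suc k) d (a * rr mu c y)) \<partial>MX mu (1,k))"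
    proof (rule nn_integral_cong)
      fix y
      have "(\<integral>\<^sup>+ x. indicator (Bset mu c K S k (Suc d) a) (x((1,k) := y)) \<partial>PiM I (MX mu))
         = (\<integral>\<^sup>+ x. indicator (Bset mu c K S (Suc k) d (a * rr mu c y)) x \<partial>PiM I (MX mu))"
        by (rule nn_integral_cong) (rule key)
      also have "\<dots> = emeasure (PiM I (MX mu)) (Bset mu c K S (Suc k) d (a * rr mu c y))"
        by (rule nn_integral_indicator) (rule B'')
      finally show "(\<integral>\<^sup>+ x. indicator (Bset mu c K S k (Suc d) a) (x((1,k) := y)) \<partial>PiM I (MX mu))
         = emeasure (PiM I (MX mu)) (Bset mu c K S (Suc k) d (a * rr mu c y))" .
    qed
    also have "\<dots> \<le> (\<integral>\<^sup>+ y. ennreal (a / K) * ennreal (rr mu c y) \<partial>MX mu (1,k))"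
    proof (rule nn_integral_mono)
      fix y
      have "emeasure (PiM I (MX mu)) (Bset mu c K S (Suc k) d (a * rr mu c y)) \<le> ennreal (a * rr mu c y / K)"
        unfolding I_def using Suc.prems by (intro Suc.IH) (simp add: rr_def)
      also have "\<dots> = ennreal (a / K) * ennreal (rr mu c y)"
        using Suc.prems K by (simp add: ennreal_mult'[symmetric] rr_def)
      finally show "emeasure (PiM I (MX mu)) (Bset mu c K S (Suc k) d (a * rr mu c y)) \<le> ennreal (a / K) * ennreal (rr mu c y)" .
    qed
    also have "\<dots> = ennreal (a / K) * (\<integral>\<^sup>+ y. ennreal (rr mu c y) \<partial>MX mu (1,k))"
      by (rule nn_integral_cmult) (simp add: rr_def MX_def)
    also have "\<dots> = ennreal (a / K)"
      using int_r[where c=c and mu=mu and k=k] by (simp add: rr_def)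
    finally show ?thesis .
  qed
qed


lemma length_arms: "length (arms U X M t) = t"
  by (induction t) auto

lemma ineq:
  fixes mu Sx N T :: real
  assumes mu: "mu \<noteq> 0" and N: "N > 0" and T: "T / 2 < N"
    and Sx: "Sx\<^sup>2 / (2 * N) < mu\<^sup>2 * T / 8"
  shows "T / 4 * (mu - mu / sqrt 2)\<^sup>2 \<le> - (mu - mu / sqrt 2) * (Sx - N * mu) - N * (mu - mu / sqrt 2)\<^sup>2 / 2"
proof -
  define s where "s = sqrt (2::real)"
  have s2: "s\<^sup>2 = 2" and s0: "s > 0" and s1: "s > 1" unfolding s_def by auto
  define c where "c = mu - mu / s"
  have mu2: "mu\<^sup>2 > 0" using mu by simp
  have "Sx\<^sup>2 < mu\<^sup>2 * T * N / 4" using Sx N by (simp add: field_simps)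
  also have "\<dots> \<le> mu\<^sup>2 * N * N / 2"
    using T N mu2 by (simp add: field_simps)
  finally have e1: "Sx\<^sup>2 < mu\<^sup>2 * N * N / 2" .
  have "(\<bar>Sx\<bar> * s)\<^sup>2 = Sx\<^sup>2 * 2" by (simp add: power_mult_distrib s2)
  moreover have "(\<bar>mu\<bar> * N)\<^sup>2 = mu\<^sup>2 * N * N" by (simp add: power_mult_distrib power2_eq_square)
  ultimately have "(\<bar>Sx\<bar> * s)\<^sup>2 < (\<bar>mu\<bar> * N)\<^sup>2" using e1 by linarith
  moreover have "0 \<le> \<bar>mu\<bar> * N" using N by simp
  ultimately have lt: "\<bar>Sx\<bar> * s < \<bar>mu\<bar> * N" by (rule power2_less_imp_less)
  have "\<bar>mu\<bar> * (\<bar>Sx\<bar> * s) < \<bar>mu\<bar> * (\<bar>mu\<bar> * N)"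
    using lt mu by (intro mult_strict_left_mono) auto
  moreover have "mu * Sx * s \<le> \<bar>mu\<bar> * (\<bar>Sx\<bar> * s)"
    using s0 by (simp add: abs_mult mult.assoc) (metis abs_ge_self abs_mult abs_of_pos mult.assoc s0)
  moreover have "\<bar>mu\<bar> * (\<bar>mu\<bar> * N) = mu * mu * N" by (simp add: abs_mult_self_eq mult.assoc[symmetric])
  ultimately have a1: "mu * Sx * s < mu * mu * N" by linarith
  have "c * (N * mu / s - Sx) \<ge> 0"
  proof -
    have "c * (N * mu / s - Sx) = (1 - 1/s) * ((mu * mu * N - mu * Sx * s) / s)"
      unfolding c_def using s0 by (simp add: field_simps)
    also have "\<dots> \<ge> 0"
    proof (rule mult_nonneg_nonneg)
      show "0 \<le> 1 - 1 / s" using s1 by (simp add: field_simps)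
      show "0 \<le> (mu * mu * N - mu * Sx * s) / s" using a1 s0 by simp
    qed
    finally show ?thesis .
  qed
  moreover have "- c * (Sx - N * mu) - N * c\<^sup>2 / 2 = c * (N * mu / s - Sx) + N * c\<^sup>2 / 2"
  proof -
    have "mu - c = mu / s" unfolding c_def by simp
    then have "c * N * mu - N * c * c = c * N * mu / s" by (metis (no_types, lifting) right_diff_distrib mult.assoc mult.commute times_divide_eq_right)
    then show ?thesis by (simp add: power2_eq_square algebra_simps)
  qed
  moreover have "T / 4 * c\<^sup>2 \<le> N * c\<^sup>2 / 2"
  proof -
    have "T / 4 \<le> N / 2" using T by simp
    then show ?thesis using mult_right_mono[of "T/4" "N/2" "c\<^sup>2"] by simp
  qed
  ultimately show ?thesis unfolding c_def s_def by linarith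
qed

lemma focus_eq: "focus_space mu = PiM UNIV (\<lambda>_. uniform_measure lborel {0<..<1::real}) \<Otimes>\<^sub>M PiM UNIV (MX mu)"
proof -
  have "(\<lambda>p. density lborel (normal_density (if fst p = 1 then mu else 0) 1)) = MX mu"
    by (rule ext) (simp add: MX_def)
  then show ?thesis unfolding focus_space_def by simp
qed

lemma E_pred[measurable]: "Measurable.pred (focus_space mu) (\<lambda>\<omega>.
      Tstat (snd \<omega>) (arms (fst \<omega>) (snd \<omega>) M t) 1 < A \<and>
      real (Ncount (arms (fst \<omega>) (snd \<omega>) M t) 1) > B)"
proof -
  have "Measurable.pred (focus_space mu) (\<lambda>\<omega>. (\<lambda>h \<omega>. Tstat (snd \<omega>) h 1 < A \<and> real (Ncount h 1) > B) (arms (fst \<omega>) (snd \<omega>) M t) \<omega>)"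
    by (rule measurable_compose_countable[OF _ m_arms]) measurable
  then show ?thesis by simp
qed

theorem lemma1:
  fixes M t :: nat and mu :: real
  assumes "M > 1" and "mu \<noteq> 0"
  defines "E \<equiv> {\<omega> \<in> space (focus_space mu).
      Tstat (snd \<omega>) (arms (fst \<omega>) (snd \<omega>) M t) 1 < mu^2 * real t powr (2/3) / 8 \<and>
      real (Ncount (arms (fst \<omega>) (snd \<omega>) M t) 1) > real t powr (2/3) / 2}"
  shows "E \<in> sets (focus_space mu) \<and>
    (t \<ge> 1 \<longrightarrow> measure (focus_space mu) E
        \<le> exp (- (real t powr (2/3)) / 4 * (mu - mu / sqrt 2)^2)) \<and>
    (t = 0 \<longrightarrow> measure (focus_space mu) E = 0)"
proof -
  have Esets: "E \<in> sets (focus_space mu)" unfolding E_def by (rule predE[OF E_pred])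
  have t0: "t = 0 \<longrightarrow> measure (focus_space mu) E = 0"
  proof
    assume "t = 0"
    then have "E = {}" unfolding E_def by (simp add: Ncount_def)
    then show "measure (focus_space mu) E = 0" by simp
  qed
  define T where "T = real t powr (2/3)"
  define c where "c = mu - mu / sqrt 2"
  define K where "K = exp (T / 4 * c\<^sup>2)"
  define S where "S = {n::nat. T / 2 < real n - 1}"
  define J where "J = Pair (1::nat) ` {1..<1+t}"
  define B where "B = Bset mu c K S 1 t 1"
  define PU where "PU = PiM UNIV (\<lambda>_::nat\<times>nat. uniform_measure lborel {0<..<1::real})"
  define F where "F = prod_emb UNIV (MX mu) J B"
  have K0: "K > 0" unfolding K_def by simp
  have T0: "T \<ge> 0" unfolding T_def by simp
  have fJ: "finite J" unfolding J_def by simp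
  have Bs: "B \<in> sets (PiM J (MX mu))" unfolding B_def J_def by (rule Bset_sets)
  have Fs: "F \<in> sets (PiM UNIV (MX mu))" unfolding F_def
    by (rule measurable_prod_emb[OF subset_UNIV Bs])
  have pu1: "prob_space (uniform_measure lborel {0<..<1::real})"
    by (rule prob_space_uniform_measure) simp_all
  have probU: "prob_space PU" unfolding PU_def
    by (rule prob_space_PiM) (rule pu1)
  have probX: "prob_space (PiM UNIV (MX mu))" by (rule prob_space_PiM) (rule prob_MX)
  interpret X: sigma_finite_measure "PiM UNIV (MX mu)" by (rule prob_space_imp_sigma_finite[OF probX])
  have G: "emeasure (focus_space mu) (space PU \<times> F) = emeasure (PiM J (MX mu)) B"
  proof -
    have "emeasure (focus_space mu) (space PU \<times> F) = emeasure PU (space PU) * emeasure (PiM UNIV (MX mu)) F"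
      unfolding focus_eq PU_def[symmetric] using Fs by (intro X.emeasure_pair_measure_Times) auto
    also have "emeasure PU (space PU) = 1" using prob_space.emeasure_space_1[OF probU] .
    also have "emeasure (PiM UNIV (MX mu)) F = emeasure (PiM J (MX mu)) B"
      unfolding F_def using Bs fJ by (intro product_prob_space.emeasure_PiM_emb'[OF pps]) auto
    finally show ?thesis by simp
  qed
  have Gs: "space PU \<times> F \<in> sets (focus_space mu)"
    unfolding focus_eq PU_def[symmetric] using Fs by auto
  have sub: "E \<subseteq> space PU \<times> F"
  proof
    fix \<omega> assume w: "\<omega> \<in> E"
    obtain U X where wUX: "\<omega> = (U, X)" by (cases \<omega>)
    define h where "h = arms U X M t"
    define N where "N = Ncount h 1"
    have Tl: "Tstat X h 1 < mu^2 * T / 8" and Nl: "T / 2 < real N"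
      using w unfolding E_def wUX h_def N_def T_def by auto
    have Nt: "N \<le> t" unfolding N_def Ncount_def h_def
      using length_filter_le[of _ "arms U X M t"] length_arms[of U X M t] by metis
    have Npos: "N > 0" using Nl T0 by (cases N) auto
    define Sx where "Sx = (\<Sum>i\<in>{1..N}. X (1, i))"
    have "seg X 1 N 0 \<le> Tstat X h 1"
      unfolding Tstat_def Let_def N_def[symmetric] using Npos by (auto intro!: Max_ge)
    then have segl: "Sx\<^sup>2 / (2 * real N) < mu\<^sup>2 * T / 8"
      using Tl unfolding seg_def Sx_def by simp
    have main: "T / 4 * c\<^sup>2 \<le> - c * (Sx - real N * mu) - real N * c\<^sup>2 / 2"
      unfolding c_def using ineq[OF \<open>mu \<noteq> 0\<close> _ Nl segl] Npos by simp
    have prodeq: "(\<Prod>i\<in>{1..<N+1}. rr mu c (restrict X J (1, i))) = exp (- c * (Sx - real N * mu) - real N * c\<^sup>2 / 2)"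
    proof -
      have "(\<Prod>i\<in>{1..<N+1}. rr mu c (restrict X J (1, i))) = (\<Prod>i\<in>{1..N}. exp (- c * (X (1,i) - mu) - c^2/2))"
        using Nt unfolding rr_def J_def by (intro prod.cong) auto
      also have "\<dots> = exp (\<Sum>i\<in>{1..N}. (- c * (X (1,i) - mu) - c^2/2))" by (simp add: exp_sum)
      also have "(\<Sum>i\<in>{1..N}. (- c * (X (1,i) - mu) - c^2/2)) = - c * (Sx - real N * mu) - real N * c\<^sup>2 / 2"
      proof -
        have "(\<Sum>i\<in>{1..N}. (- c * (X (1,i) - mu) - c^2/2)) = (\<Sum>i\<in>{1..N}. (c*mu - c^2/2) - c * X (1,i))"
          by (rule sum.cong) (auto simp: algebra_simps)
        also have "\<dots> = real N * (c*mu - c^2/2) - c * Sx"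
          by (simp add: sum_subtractf sum_distrib_left Sx_def)
        also have "\<dots> = - c * (Sx - real N * mu) - real N * c\<^sup>2 / 2"
          by (simp add: algebra_simps power2_eq_square)
        finally show ?thesis .
      qed
      finally show ?thesis .
    qed
    have "restrict X J \<in> B"
      unfolding B_def Bset_def J_def[symmetric]
    proof (intro CollectI conjI bexI[of _ "N+1"])
      show "restrict X J \<in> space (PiM J (MX mu))" by (simp add: space_PiM)
      show "N + 1 \<in> S" using Nl unfolding S_def by simp
      show "N + 1 \<in> {1..1+t}" using Nt by simp
      show "K \<le> 1 * (\<Prod>i\<in>{1..<N+1}. rr mu c (restrict X J (1, i)))"
        unfolding prodeq K_def using main by simp
    qed
    then have "X \<in> F" unfolding F_def prod_emb_def by (simp add: space_PiM)
    then show "\<omega> \<in> space PU \<times> F" unfolding wUX PU_def by (simp add: space_PiM)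
  qed
  have "emeasure (focus_space mu) E \<le> emeasure (focus_space mu) (space PU \<times> F)"
    using sub Gs by (rule emeasure_mono)
  also have "\<dots> \<le> ennreal (1 / K)" unfolding G B_def J_def
    using doob[OF K0, where a=1 and mu=mu and c=c and S=S and k=1 and d=t] by simp
  finally have "measure (focus_space mu) E \<le> 1 / K"
    unfolding measure_def using K0 by (intro enn2real_leI) auto
  also have "1 / K = exp (- (real t powr (2/3)) / 4 * (mu - mu / sqrt 2)^2)"
  proof -
    have "1 / K = exp (- (T / 4 * c\<^sup>2))" unfolding K_def by (simp add: exp_minus inverse_eq_divide)
    also have "- (T / 4 * c\<^sup>2) = - T / 4 * c\<^sup>2" by simp
    finally show ?thesis unfolding T_def c_def .
  qed
  finally show ?thesis using Esets t0 by simp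
qed

end
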